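(* For $n\in\mathbb{N}_{\geq 1}$ let $c_n$ denote the minimal Colless index among all rooted binary trees with $n$ leaves. Then $c_1=c_2=0$, and for all $n\in\mathbb{N}_{\geq 1}$, $$c_{2n}=2c_n,\qquad c_{2n+1}=c_{n+1}+c_n+1.$$
   Context: A rooted binary tree with $n\geq 2$ leaves is a rooted tree whose root has degree 2 and all other internal (non-leaf) nodes have degree 3; for $n=1$ it is a single node (which is both root and leaf). For an internal node $v$ with children $v_1,v_2$, let $\kappa(v_i)$ be the number of leaves descending from $v_i$ (with $\kappa(v_i)=1$ if $v_i$ is a leaf). The Colless index of a rooted binary tree $T$ is $\mathcal{C}(T)=\sum_{v}|\kappa(v_1)-\kappa(v_2)|$, the sum over all internal nodes $v$ of $T$. *)

theory Defs
  imports Main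
begin

text \<open>Rooted binary trees (shapes): a leaf, or an internal node with two children.
  Child order is irrelevant for the Colless index.\<close>
datatype btree = Leaf | Node btree btree

fun leaves :: "btree \<Rightarrow> nat" where
  "leaves Leaf = 1"
| "leaves (Node l r) = leaves l + leaves r"

fun colless :: "btree \<Rightarrow> int" where
  "colless Leaf = 0"
| "colless (Node l r) = \<bar>int (leaves l) - int (leaves r)\<bar> + colless l + colless r"

definition min_colless :: "nat \<Rightarrow> int" where
  "min_colless n = Min (colless ` {t. leaves t = n})"

end

theory Submission
  imports Defs
begin

function f :: "nat \<Rightarrow> int" where
  "f n = (if n \<le> 1 then 0 else f (n div 2) + f ((n+1) div 2) + int (n mod 2))"
  by auto
termination by (relation "measure id") auto

declare f.simps[simp del]

lemma f01: "f 0 = 0" "f (Suc 0) = 0" by (simp_all add: f.simps)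

lemma f_even: "f (2*n) = 2 * f n"
proof (cases "n \<le> 0")
  case True then show ?thesis by (simp add: f01)
next
  case False
  have "f (2*n) = f n + f n + 0" by (subst f.simps) (use False in auto)
  then show ?thesis by simp
qed

lemma f_odd: "f (2*n+1) = f (n+1) + f n + (if n = 0 then 0 else 1)"
  by (cases "n = 0") (simp_all add: f01, subst f.simps, auto)

lemma key: "f (a+b) \<le> f a + f b + \<bar>int a - int b\<bar>"
proof (induction "a+b" arbitrary: a b rule: less_induct)
  case less
  have IH: "\<And>c d. c + d < a + b \<Longrightarrow> f (c+d) \<le> f c + f d + \<bar>int c - int d\<bar>"
    using less by blast
  show ?case
  proof (cases "a = 0 \<or> b = 0")
    case True then show ?thesis using f01 by auto
  next
    case False
    obtain x where ax: "a = 2*x \<or> a = 2*x+1" by (metis oddE evenE)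
    obtain y where by': "b = 2*y \<or> b = 2*y+1" by (metis oddE evenE)
    consider "a = 2*x" "b = 2*y" | "a = 2*x" "b = 2*y+1" | "a = 2*x+1" "b = 2*y" | "a = 2*x+1" "b = 2*y+1"
      using ax by' by blast
    then show ?thesis
    proof cases
      case 1
      with False have "x+y < a+b" by auto
      from IH[OF this] have i: "f (x+y) \<le> f x + f y + \<bar>int x - int y\<bar>" .
      have "a + b = 2*(x+y)" using 1 by simp
      then have "f (a+b) = 2 * f (x+y)" by (metis f_even)
      moreover have "f a = 2 * f x" "f b = 2 * f y" using 1 f_even by simp_all
      moreover have "\<bar>int a - int b\<bar> = 2 * \<bar>int x - int y\<bar>" using 1 by (simp add: abs_if)
      moreover have "2 * f (x+y) \<le> 2 * f x + 2 * f y + 2 * \<bar>int x - int y\<bar>" using mult_left_mono[OF i, of 2] by (simp add: distrib_left)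
      ultimately show ?thesis by (simp only:)
    next
      case 2
      with False have x1: "x \<ge> 1" by auto
      have i1: "f (x+(y+1)) \<le> f x + f (y+1) + \<bar>int x - int (y+1)\<bar>" by (rule IH) (use 2 x1 in auto)
      have i2: "f (x+y) \<le> f x + f y + \<bar>int x - int y\<bar>" by (rule IH) (use 2 x1 in auto)
      have i3: "f (x+1) \<le> f x + f 1 + \<bar>int x - int 1\<bar>" by (rule IH) (use 2 x1 in auto)
      have e: "a + b = 2*(x+y)+1" using 2 by simp
      have "f (a+b) = f (x+y+1) + f (x+y) + 1" using e f_odd[of "x+y"] x1 by simp
      moreover have fa: "f a = 2 * f x" using 2 f_even by simp
      moreover have fb: "f b = f (y+1) + f y + (if y = 0 then 0 else 1)" using 2 f_odd by simp
      ultimately show ?thesis using i1 i2 i3 f01 x1 2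
        by (cases "y = 0"; cases "x < y"; cases "y < x") (simp_all add: abs_if split: if_split_asm)
    next
      case 3
      with False have y1: "y \<ge> 1" by auto
      have i1: "f ((x+1)+y) \<le> f (x+1) + f y + \<bar>int (x+1) - int y\<bar>" by (rule IH) (use 3 y1 in auto)
      have i2: "f (x+y) \<le> f x + f y + \<bar>int x - int y\<bar>" by (rule IH) (use 3 y1 in auto)
      have i3: "f (y+1) \<le> f y + f 1 + \<bar>int y - int 1\<bar>" by (rule IH) (use 3 y1 in auto)
      have e: "a + b = 2*(x+y)+1" using 3 by simp
      have "f (a+b) = f (x+y+1) + f (x+y) + 1" using e f_odd[of "x+y"] y1 by simp
      moreover have fa: "f b = 2 * f y" using 3 f_even by simp
      moreover have fb: "f a = f (x+1) + f x + (if x = 0 then 0 else 1)" using 3 f_odd by simp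
      moreover have "x + y + 1 = (x+1) + y" by simp
      ultimately show ?thesis using i1 i2 i3 f01 y1 3
        by (cases "x = 0"; cases "x < y"; cases "y < x") (simp_all add: abs_if split: if_split_asm)
    next
      case 4
      have i1: "f ((x+1)+y) \<le> f (x+1) + f y + \<bar>int (x+1) - int y\<bar>" by (rule IH) (use 4 in auto)
      have i2: "f (x+(y+1)) \<le> f x + f (y+1) + \<bar>int x - int (y+1)\<bar>" by (rule IH) (use 4 in auto)
      have e: "a + b = 2*(x+y+1)" using 4 by simp
      have "f (a+b) = 2 * f (x+y+1)" using e by (metis f_even)
      moreover have fa: "f a = f (x+1) + f x + (if x = 0 then 0 else 1)" using 4 f_odd by simp
      moreover have fb: "f b = f (y+1) + f y + (if y = 0 then 0 else 1)" using 4 f_odd by simp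
      moreover have "x + y + 1 = (x+1) + y" "x + y + 1 = x + (y+1)" by simp_all
      ultimately show ?thesis using i1 i2 f01 4
        by (cases "x = 0"; cases "y = 0"; cases "x < y"; cases "y < x") (simp_all add: abs_if split: if_split_asm)
    qed
  qed
qed

lemma lower: "colless t \<ge> f (leaves t)"
proof (induction t)
  case Leaf then show ?case by (simp add: f01)
next
  case (Node l r)
  then show ?case using key[of "leaves l" "leaves r"] by simp
qed

lemma leaves_pos: "leaves t \<ge> 1" by (induction t) auto

lemma upper: "colless t \<le> int (leaves t)^2"
proof (induction t)
  case Leaf then show ?case by simp
next
  case (Node l r)
  have l: "leaves l \<ge> 1" "leaves r \<ge> 1" by (rule leaves_pos)+
  define p where "p = int (leaves l)"
  define q where "q = int (leaves r)"
  have "p \<ge> 1" "q \<ge> 1" using l by (auto simp: p_def q_def)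
  have "p \<le> p*q" "q \<le> p*q" using \<open>p \<ge> 1\<close> \<open>q \<ge> 1\<close> by (simp_all add: mult_le_cancel_left1 mult_le_cancel_right1)
  hence "p - q \<le> 2*(p*q)" "q - p \<le> 2*(p*q)" using \<open>p \<ge> 1\<close> \<open>q \<ge> 1\<close> by linarith+
  hence ab: "\<bar>p - q\<bar> \<le> 2*(p*q)" by (simp add: abs_le_iff)
  have "(p+q)^2 = p^2 + q^2 + 2*(p*q)" by (simp add: power2_eq_square algebra_simps)
  hence "\<bar>p - q\<bar> + p^2 + q^2 \<le> (p+q)^2" using ab by linarith
  then show ?case using Node by (simp add: p_def q_def)
qed

function bal :: "nat \<Rightarrow> btree" where
  "bal n = (if n \<le> 1 then Leaf else Node (bal ((n+1) div 2)) (bal (n div 2)))"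
  by auto
termination by (relation "measure id") auto

declare bal.simps[simp del]

lemma bal: "n \<ge> 1 \<Longrightarrow> leaves (bal n) = n \<and> colless (bal n) = f n"
proof (induction n rule: less_induct)
  case (less n)
  show ?case
  proof (cases "n \<le> 1")
    case True then have "n = 1" using less.prems by simp
    then show ?thesis by (simp add: bal.simps f01)
  next
    case False
    have a: "leaves (bal ((n+1) div 2)) = (n+1) div 2 \<and> colless (bal ((n+1) div 2)) = f ((n+1) div 2)"
      using less.IH False by auto
    have b: "leaves (bal (n div 2)) = n div 2 \<and> colless (bal (n div 2)) = f (n div 2)"
      using less.IH False by auto
    have "f n = f (n div 2) + f ((n+1) div 2) + int (n mod 2)" using False by (subst f.simps) auto
    moreover have "(n+1) div 2 + n div 2 = n" by presburger
    moreover have "\<bar>int ((n+1) div 2) - int (n div 2)\<bar> = int (n mod 2)"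
    proof -
      have h: "(n+1) div 2 = n div 2 + n mod 2" by presburger
      show ?thesis unfolding h by simp
    qed
    moreover have "bal n = Node (bal ((n+1) div 2)) (bal (n div 2))" using False by (subst bal.simps) simp
    ultimately show ?thesis using a b by simp
  qed
qed

lemma cnn: "colless t \<ge> 0" by (induction t) auto

lemma mc: assumes "n \<ge> 1" shows "min_colless n = f n"
  unfolding min_colless_def
proof (rule Min_eqI)
  show "finite (colless ` {t. leaves t = n})"
  proof (rule finite_subset[of _ "{0..int n^2}"])
    show "colless ` {t. leaves t = n} \<subseteq> {0..int n^2}"
      using cnn upper by fastforce
  qed simp
  show "\<And>y. y \<in> colless ` {t. leaves t = n} \<Longrightarrow> f n \<le> y" using lower by auto
  show "f n \<in> colless ` {t. leaves t = n}" using bal[OF \<open>n \<ge> 1\<close>] by (metis (mono_tags) image_eqI mem_Collect_eq)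
qed

theorem theorem1:
  shows "min_colless 1 = 0 \<and> min_colless 2 = 0 \<and>
    (\<forall>n::nat. n \<ge> 1 \<longrightarrow>
       min_colless (2 * n) = 2 * min_colless n \<and>
       min_colless (2 * n + 1) = min_colless (n + 1) + min_colless n + 1)"
proof -
  have "f 2 = 0" using f_even[of 1] f01 by simp
  moreover have "\<forall>n::nat. n \<ge> 1 \<longrightarrow>
       f (2 * n) = 2 * f n \<and> f (2 * n + 1) = f (n + 1) + f n + 1"
    using f_even f_odd by auto
  ultimately show ?thesis using mc f01 by auto
qed

end
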